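(* Let $\Gamma=\langle V,(w_u)_{u\in V},\alpha,\beta\rangle$ be a celebrity game with $\beta>1$ and let $W=\sum_{u\in V}w_u$. Then: (i) if $\Gamma$ is a star celebrity game, $PoS(\Gamma)=1$; (ii) if $\Gamma$ is not a star celebrity game and $\alpha\ge W$, then $PoS(\Gamma)=PoA(\Gamma)=1$; (iii) if $\Gamma$ is not a star celebrity game and $\alpha<W$, then $PoS(\Gamma)=PoA(\Gamma)=W/\alpha>1$.
   Context: A celebrity game $\Gamma=\langle V,(w_u)_{u\in V},\alpha,\beta\rangle$ consists of a set of players $V=\{1,\dots,n\}$, celebrity weights $w_u>0$, a link cost $\alpha>0$ and a critical distance $\beta$ with $1\le\beta\le n-1$. A strategy of player $u$ is a set $S_u\subseteq V\setminus\{u\}$; a strategy profile is $S=(S_1,\dots,S_n)$; its outcome graph $G[S]$ is the undirected graph on $V$ with edge set $\{\{u,v\}: u\in S_v\text{ or }v\in S_u\}$. With $d_G$ the graph distance (infinite between different connected components), the cost of player $u$ is $c_u(S)=\alpha|S_u|+\sum_{v:\,d_{G[S]}(u,v)>\beta}w_v$ and the social cost is $C(S)=\sum_{u\in V}c_u(S)$. $S$ is a Nash equilibrium (NE) if no player can strictly decrease its cost by changing only its own strategy; a graph is an NE graph of $\Gamma$ if it is $G[S]$ for some NE $S$. $\mathrm{opt}(\Gamma)=\min_S C(S)$, $PoA(\Gamma)=\max_{S\text{ NE}}C(S)/\mathrm{opt}(\Gamma)$ and $PoS(\Gamma)=\min_{S\text{ NE}}C(S)/\mathrm{opt}(\Gamma)$.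 $\Gamma$ is a star celebrity game if it has an NE graph that is connected. *)

theory Defs
  imports Main "HOL-Library.Extended_Nat"
begin

definition players :: "nat \<Rightarrow> nat set" where
  "players n = {1..n}"

definition profiles :: "nat \<Rightarrow> (nat \<Rightarrow> nat set) set" where
  "profiles n = {S. (\<forall>u\<in>players n. S u \<subseteq> players n - {u}) \<and> (\<forall>u. u \<notin> players n \<longrightarrow> S u = {})}"

definition outcome_edges :: "(nat \<Rightarrow> nat set) \<Rightarrow> nat set set" where
  "outcome_edges S = {{u, v} | u v. u \<in> S v \<or> v \<in> S u}"

fun walk_le :: "nat set set \<Rightarrow> nat \<Rightarrow> nat \<Rightarrow> nat \<Rightarrow> bool" where
  "walk_le E 0 u v = (u = v)"
| "walk_le E (Suc k) u v = (walk_le E k u v \<or> (\<exists>x. walk_le E k u x \<and> {x, v} \<in> E))"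

definition gdist :: "nat set set \<Rightarrow> nat \<Rightarrow> nat \<Rightarrow> enat" where
  "gdist E u v = (if \<exists>k. walk_le E k u v then enat (LEAST k. walk_le E k u v) else \<infinity>)"

definition player_cost ::
  "nat \<Rightarrow> (nat \<Rightarrow> real) \<Rightarrow> real \<Rightarrow> nat \<Rightarrow> (nat \<Rightarrow> nat set) \<Rightarrow> nat \<Rightarrow> real" where
  "player_cost n w \<alpha> \<beta> S u =
     \<alpha> * real (card (S u)) +
     (\<Sum>v\<in>{v\<in>players n. gdist (outcome_edges S) u v > enat \<beta>}. w v)"

definition social_cost ::
  "nat \<Rightarrow> (nat \<Rightarrow> real) \<Rightarrow> real \<Rightarrow> nat \<Rightarrow> (nat \<Rightarrow> nat set) \<Rightarrow> real" where
  "social_cost n w \<alpha> \<beta> S = (\<Sum>u\<in>players n. player_cost n w \<alpha> \<beta> S u)"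

definition is_NE :: "nat \<Rightarrow> (nat \<Rightarrow> real) \<Rightarrow> real \<Rightarrow> nat \<Rightarrow> (nat \<Rightarrow> nat set) \<Rightarrow> bool" where
  "is_NE n w \<alpha> \<beta> S \<longleftrightarrow> S \<in> profiles n \<and>
     (\<forall>u\<in>players n. \<forall>T. S(u := T) \<in> profiles n \<longrightarrow>
        player_cost n w \<alpha> \<beta> S u \<le> player_cost n w \<alpha> \<beta> (S(u := T)) u)"

definition opt :: "nat \<Rightarrow> (nat \<Rightarrow> real) \<Rightarrow> real \<Rightarrow> nat \<Rightarrow> real" where
  "opt n w \<alpha> \<beta> = Min (social_cost n w \<alpha> \<beta> ` profiles n)"

definition PoA :: "nat \<Rightarrow> (nat \<Rightarrow> real) \<Rightarrow> real \<Rightarrow> nat \<Rightarrow> real" where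
  "PoA n w \<alpha> \<beta> = Max ((\<lambda>S. social_cost n w \<alpha> \<beta> S / opt n w \<alpha> \<beta>) ` {S. is_NE n w \<alpha> \<beta> S})"

definition PoS :: "nat \<Rightarrow> (nat \<Rightarrow> real) \<Rightarrow> real \<Rightarrow> nat \<Rightarrow> real" where
  "PoS n w \<alpha> \<beta> = Min ((\<lambda>S. social_cost n w \<alpha> \<beta> S / opt n w \<alpha> \<beta>) ` {S. is_NE n w \<alpha> \<beta> S})"

definition connected_graph :: "nat set \<Rightarrow> nat set set \<Rightarrow> bool" where
  "connected_graph V E \<longleftrightarrow> (\<forall>u\<in>V. \<forall>v\<in>V. gdist E u v < \<infinity>)"

definition star_celebrity_game :: "nat \<Rightarrow> (nat \<Rightarrow> real) \<Rightarrow> real \<Rightarrow> nat \<Rightarrow> bool" where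
  "star_celebrity_game n w \<alpha> \<beta> \<longleftrightarrow>
     (\<exists>S. is_NE n w \<alpha> \<beta> S \<and> connected_graph (players n) (outcome_edges S))"

definition celebrity_game :: "nat \<Rightarrow> (nat \<Rightarrow> real) \<Rightarrow> real \<Rightarrow> nat \<Rightarrow> bool" where
  "celebrity_game n w \<alpha> \<beta> \<longleftrightarrow>
     (\<forall>u\<in>players n. w u > 0) \<and> \<alpha> > 0 \<and> 1 \<le> \<beta> \<and> \<beta> \<le> n - 1"

end

theory Submission
  imports Defs
begin


lemma walk_Suc: "walk_le E k a b \<Longrightarrow> walk_le E (Suc k) a b" by simp

lemma walk_mono_k: "walk_le E k a b \<Longrightarrow> k \<le> k' \<Longrightarrow> walk_le E k' a b"
proof -
  assume h: "walk_le E k a b" "k \<le> k'"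
  have "walk_le E (k + d) a b" for d by (induction d) (use h in auto)
  from this[of "k' - k"] h(2) show ?thesis by simp
qed

lemma walk_mono_E: "E \<subseteq> E' \<Longrightarrow> walk_le E k a b \<Longrightarrow> walk_le E' k a b"
  by (induction k arbitrary: b) auto

lemma walk_snoc: "walk_le E k a x \<Longrightarrow> {x,b} \<in> E \<Longrightarrow> walk_le E (Suc k) a b"
  by auto

lemma walk_cons: "{a,x} \<in> E \<Longrightarrow> walk_le E k x b \<Longrightarrow> walk_le E (Suc k) a b"
proof (induction k arbitrary: b)
  case 0 then show ?case by auto
next
  case (Suc k)
  from Suc.prems(2) show ?case
  proof (cases "walk_le E k x b")
    case True then show ?thesis using Suc by (metis walk_Suc)
  next
    case False
    then obtain y where "walk_le E k x y" "{y,b} \<in> E" using Suc.prems(2) by auto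
    then show ?thesis using Suc.IH Suc.prems(1) by (metis walk_snoc)
  qed
qed

lemma walk_sym: "walk_le E k a b \<Longrightarrow> walk_le E k b a"
proof (induction k arbitrary: b)
  case 0 then show ?case by auto
next
  case (Suc k)
  show ?case
  proof (cases "walk_le E k a b")
    case True then show ?thesis using Suc by (metis walk_Suc)
  next
    case False
    then obtain y where "walk_le E k a y" "{y,b} \<in> E" using Suc.prems by auto
    then show ?thesis using Suc.IH by (metis walk_cons insert_commute)
  qed
qed

lemma walk_trans: "walk_le E k a b \<Longrightarrow> walk_le E m b c \<Longrightarrow> walk_le E (k+m) a c"
proof (induction m arbitrary: c)
  case 0 then show ?case by auto
next
  case (Suc m)
  show ?case
  proof (cases "walk_le E m b c")
    case True then show ?thesis using Suc by (metis walk_Suc add_Suc_right)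
  next
    case False
    then obtain y where "walk_le E m b y" "{y,c} \<in> E" using Suc.prems by auto
    then show ?thesis using Suc.IH Suc.prems by (metis walk_snoc add_Suc_right)
  qed
qed

lemma walk_isolated: "(\<forall>y. {a,y} \<notin> E) \<Longrightarrow> walk_le E k a v \<Longrightarrow> v = a"
  by (induction k arbitrary: v) auto

lemma walk_avoid: "walk_le E k a b \<Longrightarrow> (\<forall>j\<le>k. \<not> walk_le E j a u) \<Longrightarrow>
   walk_le {e\<in>E. u \<notin> e} k a b"
proof (induction k arbitrary: b)
  case 0 then show ?case by auto
next
  case (Suc k)
  show ?case
  proof (cases "walk_le E k a b")
    case True then show ?thesis using Suc by simp
  next
    case False
    then obtain y where y: "walk_le E k a y" "{y,b} \<in> E" using Suc.prems by auto
    have "y \<noteq> u" using y(1) Suc.prems(2) by auto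
    moreover have "b \<noteq> u" using Suc.prems by blast
    ultimately show ?thesis using Suc y by auto
  qed
qed

lemma gdist_gt: "(enat m < gdist E a b) = (\<not> walk_le E m a b)"
proof
  assume h: "enat m < gdist E a b"
  show "\<not> walk_le E m a b"
  proof
    assume w: "walk_le E m a b"
    then have "(LEAST k. walk_le E k a b) \<le> m" by (rule Least_le)
    moreover have "gdist E a b = enat (LEAST k. walk_le E k a b)" using w unfolding gdist_def by auto
    ultimately show False using h by simp
  qed
next
  assume h: "\<not> walk_le E m a b"
  show "enat m < gdist E a b"
  proof (cases "\<exists>k. walk_le E k a b")
    case True
    then have "walk_le E (LEAST k. walk_le E k a b) a b" by (rule LeastI_ex)
    then have "\<not> (LEAST k. walk_le E k a b) \<le> m" using h walk_mono_k by blast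
    then show ?thesis using True unfolding gdist_def by auto
  next
    case False then show ?thesis unfolding gdist_def by auto
  qed
qed

lemma gdist_fin: "(gdist E a b < \<infinity>) = (\<exists>k. walk_le E k a b)"
  unfolding gdist_def by auto

lemma edge_iff: "({x,y} \<in> outcome_edges S) = (x \<in> S y \<or> y \<in> S x)"
  unfolding outcome_edges_def by (auto simp: doubleton_eq_iff)


definition far :: "nat \<Rightarrow> nat set set \<Rightarrow> nat \<Rightarrow> nat \<Rightarrow> nat set" where
  "far n E \<beta> u = {v \<in> players n. \<not> walk_le E \<beta> u v}"

lemma cost_alt: "player_cost n w \<alpha> \<beta> S u = \<alpha> * real (card (S u)) + sum w (far n (outcome_edges S) \<beta> u)"
  unfolding player_cost_def far_def gdist_gt ..

lemma far_sub: "far n E \<beta> u \<subseteq> players n" unfolding far_def by auto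
lemma far_self: "u \<notin> far n E \<beta> u" unfolding far_def using walk_mono_k[of E 0 u u \<beta>] by auto

lemma fin_players[simp]: "finite (players n)" unfolding players_def by simp

lemma prof_sub: "S \<in> profiles n \<Longrightarrow> S u \<subseteq> players n - {u}"
  unfolding profiles_def by (cases "u \<in> players n") auto

lemma prof_fin: "S \<in> profiles n \<Longrightarrow> finite (S u)"
  using prof_sub[of S n u] by (meson finite_Diff fin_players finite_subset)

lemma prof_mem: "S \<in> profiles n \<Longrightarrow> x \<in> S y \<Longrightarrow> y \<in> players n \<and> x \<in> players n \<and> x \<noteq> y"
  unfolding profiles_def by auto

lemma prof_upd: "S \<in> profiles n \<Longrightarrow> u \<in> players n \<Longrightarrow> T \<subseteq> players n - {u} \<Longrightarrow> S(u := T) \<in> profiles n"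
  unfolding profiles_def by auto

lemma prof_upd_sub: "S(u := T) \<in> profiles n \<Longrightarrow> u \<in> players n \<Longrightarrow> T \<subseteq> players n - {u}"
  using prof_sub[of "S(u:=T)" n u] by simp

lemma fin_profiles: "finite (profiles n)"
proof -
  have "profiles n \<subseteq> {f. \<forall>x. (x \<in> players n \<longrightarrow> f x \<in> Pow (players n)) \<and> (x \<notin> players n \<longrightarrow> f x = {})}"
    unfolding profiles_def by auto
  moreover have "finite {f. \<forall>x. (x \<in> players n \<longrightarrow> f x \<in> Pow (players n)) \<and> (x \<notin> players n \<longrightarrow> f x = ({}::nat set))}"
    by (rule finite_set_of_finite_funs) auto
  ultimately show ?thesis by (rule finite_subset)
qed

lemma sum_w_nonneg: "celebrity_game n w \<alpha> \<beta> \<Longrightarrow> A \<subseteq> players n \<Longrightarrow> 0 \<le> sum w A"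
  unfolding celebrity_game_def by (intro sum_nonneg) (auto simp: less_imp_le)

lemma sum_w_mono: "celebrity_game n w \<alpha> \<beta> \<Longrightarrow> A \<subseteq> B \<Longrightarrow> B \<subseteq> players n \<Longrightarrow> sum w A \<le> sum w B"
  unfolding celebrity_game_def
  by (intro sum_mono2) (auto intro: finite_subset less_imp_le)

lemma sum_w_Un: "celebrity_game n w \<alpha> \<beta> \<Longrightarrow> A \<subseteq> players n \<Longrightarrow> B \<subseteq> players n \<Longrightarrow> sum w (A \<union> B) \<le> sum w A + sum w B"
proof -
  assume c: "celebrity_game n w \<alpha> \<beta>" and AB: "A \<subseteq> players n" "B \<subseteq> players n"
  have fa: "finite A" "finite B" using AB by (auto intro: finite_subset[OF _ fin_players])
  have "sum w (A \<union> B) = sum w A + sum w B - sum w (A \<inter> B)" using sum_Un[OF fa] .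
  moreover have "0 \<le> sum w (A \<inter> B)" using sum_w_nonneg[OF c, of "A \<inter> B"] AB by auto
  ultimately show ?thesis by linarith
qed

lemma cost_nonneg: "celebrity_game n w \<alpha> \<beta> \<Longrightarrow> 0 \<le> player_cost n w \<alpha> \<beta> S u"
proof -
  assume c: "celebrity_game n w \<alpha> \<beta>"
  have "0 \<le> sum w (far n (outcome_edges S) \<beta> u)" using sum_w_nonneg[OF c far_sub] .
  moreover have "0 \<le> \<alpha>" using c by (simp add: celebrity_game_def)
  ultimately show ?thesis unfolding cost_alt by simp
qed

lemma owner:
  assumes c: "celebrity_game n w \<alpha> \<beta>" and NE: "is_NE n w \<alpha> \<beta> S" and z: "z \<in> players n"
    and ne: "S z \<noteq> {}"
  shows "\<alpha> \<le> sum w (players n) - w z"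
proof -
  have S: "S \<in> profiles n" using NE is_NE_def by auto
  have S': "S(z := {}) \<in> profiles n" using prof_upd[OF S z] by auto
  have le: "player_cost n w \<alpha> \<beta> S z \<le> player_cost n w \<alpha> \<beta> (S(z := {})) z"
    using NE S' z unfolding is_NE_def by blast
  have "far n (outcome_edges (S(z := {}))) \<beta> z \<subseteq> players n - {z}" using far_sub far_self by blast
  then have "sum w (far n (outcome_edges (S(z := {}))) \<beta> z) \<le> sum w (players n - {z})"
    using sum_w_mono[OF c] by blast
  also have "\<dots> = sum w (players n) - w z" using z by (simp add: sum_diff1)
  finally have r: "player_cost n w \<alpha> \<beta> (S(z := {})) z \<le> sum w (players n) - w z"
    unfolding cost_alt by simp
  have "card (S z) \<ge> 1" using ne prof_fin[OF S] by (simp add: Suc_le_eq card_gt_0_iff)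
  then have "\<alpha> \<le> \<alpha> * real (card (S z))" using c unfolding celebrity_game_def by simp
  moreover have "0 \<le> sum w (far n (outcome_edges S) \<beta> z)" using sum_w_nonneg[OF c far_sub] .
  ultimately have "\<alpha> \<le> player_cost n w \<alpha> \<beta> S z" unfolding cost_alt by linarith
  then show ?thesis using le r by linarith
qed

lemma drop_contra:
  assumes c: "celebrity_game n w \<alpha> \<beta>" and NE: "is_NE n w \<alpha> \<beta> S" and z: "z \<in> players n"
    and v: "v \<in> S z" and y: "y \<in> players n" and wy: "sum w (players n) - w y < \<alpha>"
    and h: "y \<notin> far n (outcome_edges (S(z := S z - {v}))) \<beta> z \<or> y \<in> far n (outcome_edges S) \<beta> z"
  shows False
proof -
  let ?S' = "S(z := S z - {v})"
  let ?F = "far n (outcome_edges S) \<beta> z" and ?F' = "far n (outcome_edges ?S') \<beta> z"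
  have S: "S \<in> profiles n" using NE is_NE_def by auto
  have S': "?S' \<in> profiles n" using prof_upd[OF S z, of "S z - {v}"] prof_sub[OF S, of z] by auto
  have le: "player_cost n w \<alpha> \<beta> S z \<le> player_cost n w \<alpha> \<beta> ?S' z"
    using NE S' z unfolding is_NE_def by blast
  have "?F' \<subseteq> ?F \<union> (players n - {y})" using h far_sub by blast
  then have "sum w ?F' \<le> sum w (?F \<union> (players n - {y}))"
    using sum_w_mono[OF c] far_sub by (metis Diff_subset Un_least)
  also have "\<dots> \<le> sum w ?F + sum w (players n - {y})" using sum_w_Un[OF c far_sub] by auto
  also have "sum w (players n - {y}) = sum w (players n) - w y" using y by (simp add: sum_diff1)
  finally have f: "sum w ?F' \<le> sum w ?F + (sum w (players n) - w y)" .
  have fin: "finite (S z)" using prof_fin[OF S] .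
  have "card (S z - {v}) = card (S z) - 1" using v fin by simp
  moreover have "card (S z) \<ge> 1" using v fin by (metis One_nat_def Suc_leI card_gt_0_iff empty_iff)
  ultimately have e: "real (card (?S' z)) = real (card (S z)) - 1" by simp
  have "player_cost n w \<alpha> \<beta> ?S' z = \<alpha> * real (card (S z)) - \<alpha> + sum w ?F'"
    unfolding cost_alt e by (simp add: algebra_simps)
  then have "player_cost n w \<alpha> \<beta> ?S' z < player_cost n w \<alpha> \<beta> S z"
    unfolding cost_alt[of n w \<alpha> \<beta> S] using f wy by linarith
  then show False using le by linarith
qed


lemma key:
  assumes c: "celebrity_game n w \<alpha> \<beta>" and NE: "is_NE n w \<alpha> \<beta> S"
    and u: "u \<in> players n" and u': "u' \<in> players n" and uu: "u \<noteq> u'"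
    and Su: "S u = {}" and wu': "sum w (players n) - w u' < \<alpha>"
  shows "\<not> walk_le (outcome_edges S) k u' u"
proof
  let ?E = "outcome_edges S"
  assume wk: "walk_le ?E k u' u"
  have S: "S \<in> profiles n" using NE is_NE_def by auto
  define D where "D = (LEAST k. walk_le ?E k u' u)"
  have wD: "walk_le ?E D u' u" unfolding D_def using wk by (rule LeastI)
  have "D \<noteq> 0" using wD uu by (cases D) auto
  then obtain D' where D': "D = Suc D'" by (cases D) auto
  have nlt: "\<not> walk_le ?E j u' u" if "j < D" for j using not_less_Least[of j] that unfolding D_def by blast
  then have "\<not> walk_le ?E D' u' u" using D' by simp
  then obtain x where x: "walk_le ?E D' u' x" "{x,u} \<in> ?E" using wD D' by auto
  have uSx: "u \<in> S x" using x(2) Su edge_iff by auto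
  have xV: "x \<in> players n" using prof_mem[OF S uSx] by auto
  have "walk_le {e\<in>?E. u \<notin> e} D' u' x"
    using walk_avoid[OF x(1)] nlt D' by auto
  moreover have "{e\<in>?E. u \<notin> e} \<subseteq> outcome_edges (S(x := S x - {u}))"
    unfolding outcome_edges_def by auto
  ultimately have "walk_le (outcome_edges (S(x := S x - {u}))) D' u' x" by (rule walk_mono_E[rotated])
  then have w2: "walk_le (outcome_edges (S(x := S x - {u}))) D' x u'" by (rule walk_sym)
  have "u' \<notin> far n (outcome_edges (S(x := S x - {u}))) \<beta> x \<or> u' \<in> far n ?E \<beta> x"
  proof (cases "D' \<le> \<beta>")
    case True
    then show ?thesis using walk_mono_k[OF w2 True] unfolding far_def by auto
  next
    case False
    have "\<not> walk_le ?E \<beta> x u'"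
    proof
      assume "walk_le ?E \<beta> x u'"
      then have "walk_le ?E (Suc \<beta>) u' u" using walk_sym walk_snoc x(2) by metis
      then have "D \<le> Suc \<beta>" unfolding D_def by (rule Least_le)
      then show False using False D' by simp
    qed
    then show ?thesis using u' unfolding far_def by auto
  qed
  then show False using drop_contra[OF c NE xV uSx u' wu'] by blast
qed

lemma NE_no_owner_bad:
  assumes c: "celebrity_game n w \<alpha> \<beta>" and NE: "is_NE n w \<alpha> \<beta> S"
    and u: "u \<in> players n" and u': "u' \<in> players n" and uu: "u \<noteq> u'"
    and b1: "sum w (players n) - \<alpha> < w u" and b2: "sum w (players n) - \<alpha> < w u'"
  shows "S = (\<lambda>_. {})"
proof
  fix z
  have S: "S \<in> profiles n" using NE is_NE_def by auto
  have Su: "S u = {}" using owner[OF c NE u] b1 by fastforce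
  show "S z = {}"
  proof (rule ccontr)
    assume "S z \<noteq> {}"
    then obtain v where v: "v \<in> S z" by auto
    have z: "z \<in> players n" using prof_mem[OF S v] by auto
    let ?E = "outcome_edges S"
    have "walk_le ?E \<beta> z u"
      using drop_contra[OF c NE z v u] b1 u unfolding far_def by auto
    moreover have "walk_le ?E \<beta> z u'"
      using drop_contra[OF c NE z v u'] b2 u' unfolding far_def by auto
    ultimately have "walk_le ?E (\<beta>+\<beta>) u' u" using walk_sym walk_trans by metis
    then show False using key[OF c NE u u' uu Su] b2 by fastforce
  qed
qed

lemma NE_no_owner_big:
  assumes c: "celebrity_game n w \<alpha> \<beta>" and NE: "is_NE n w \<alpha> \<beta> S"
    and a: "sum w (players n) \<le> \<alpha>"
  shows "S = (\<lambda>_. {})"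
proof
  fix z
  have S: "S \<in> profiles n" using NE is_NE_def by auto
  show "S z = {}"
  proof (rule ccontr)
    assume ne: "S z \<noteq> {}"
    then obtain v where v: "v \<in> S z" by auto
    have z: "z \<in> players n" using prof_mem[OF S v] by auto
    have "0 < w z" using c z unfolding celebrity_game_def by auto
    then show False using owner[OF c NE z ne] a by linarith
  qed
qed


lemma sum_players_card: "card (players n) = n" unfolding players_def by simp

lemma empty_prof: "(\<lambda>_. {}) \<in> profiles n" unfolding profiles_def by auto

lemma empty_edges: "outcome_edges (\<lambda>_. {}) = {}" unfolding outcome_edges_def by auto

lemma empty_far: "far n {} \<beta> u = players n - {u}"
  unfolding far_def using walk_isolated[of u "{}"] walk_mono_k[of "{}" 0 u u \<beta>] by auto

lemma empty_cost: "social_cost n w \<alpha> \<beta> (\<lambda>_. {}) = (real n - 1) * sum w (players n)"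
proof -
  have "social_cost n w \<alpha> \<beta> (\<lambda>_. {}) = (\<Sum>u\<in>players n. sum w (players n) - w u)"
    unfolding social_cost_def cost_alt empty_edges empty_far
    by (intro sum.cong) (auto simp: sum_diff1)
  also have "\<dots> = real n * sum w (players n) - sum w (players n)"
    by (simp add: sum_subtractf sum_players_card)
  finally show ?thesis by (simp add: algebra_simps)
qed

lemma empty_NE:
  assumes c: "celebrity_game n w \<alpha> \<beta>" and small: "\<forall>v\<in>players n. w v \<le> \<alpha>"
  shows "is_NE n w \<alpha> \<beta> (\<lambda>_. {})"
  unfolding is_NE_def
proof (intro conjI ballI allI impI)
  show "(\<lambda>_. {}) \<in> profiles n" by (rule empty_prof)
  fix u T
  assume u: "u \<in> players n" and P: "(\<lambda>_. {}::nat set)(u := T) \<in> profiles n"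
  let ?S' = "(\<lambda>_. {}::nat set)(u := T)"
  have T: "T \<subseteq> players n - {u}" using prof_upd_sub[OF P u] .
  have finT: "finite T" using T by (auto intro: finite_subset[OF _ fin_players])
  have reach: "walk_le (outcome_edges ?S') k u v \<Longrightarrow> v \<in> insert u T" for k v
  proof (induction k arbitrary: v)
    case 0 then show ?case by simp
  next
    case (Suc k)
    then show ?case
    proof (cases "walk_le (outcome_edges ?S') k u v")
      case True then show ?thesis using Suc by blast
    next
      case False
      then obtain x where x: "walk_le (outcome_edges ?S') k u x" "{x,v} \<in> outcome_edges ?S'"
        using Suc.prems by (metis walk_le.simps(2))
      then show ?thesis using edge_iff[of x v ?S'] Suc.IH by (auto split: if_splits)
    qed
  qed
  have sub: "players n - {u} - T \<subseteq> far n (outcome_edges ?S') \<beta> u"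
    unfolding far_def using reach by blast
  have "sum w (players n - {u} - T) \<le> sum w (far n (outcome_edges ?S') \<beta> u)"
    using sum_w_mono[OF c sub far_sub] .
  moreover have "sum w T \<le> real (card T) * \<alpha>"
    using sum_bounded_above[of T w \<alpha>] small T by auto
  moreover have "sum w (players n - {u} - T) + sum w T = sum w (players n - {u})"
    using T by (metis add.commute fin_players finite_Diff sum.subset_diff)
  ultimately have "sum w (players n - {u}) \<le> player_cost n w \<alpha> \<beta> ?S' u"
    unfolding cost_alt by (simp add: algebra_simps)
  moreover have "player_cost n w \<alpha> \<beta> (\<lambda>_. {}) u = sum w (players n - {u})"
    unfolding cost_alt empty_edges empty_far by simp
  ultimately show "player_cost n w \<alpha> \<beta> (\<lambda>_. {}) u \<le> player_cost n w \<alpha> \<beta> ?S' u" by simp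
qed





definition star :: "nat \<Rightarrow> nat \<Rightarrow> nat set \<Rightarrow> nat \<Rightarrow> nat set" where
  "star n c A = (\<lambda>x. if x = c then A else if x \<in> players n - {c} - A then {c} else {})"

lemma star_prof: "c \<in> players n \<Longrightarrow> A \<subseteq> players n - {c} \<Longrightarrow> star n c A \<in> profiles n"
  unfolding profiles_def star_def by auto

lemma star_edge: "c \<in> players n \<Longrightarrow> A \<subseteq> players n - {c} \<Longrightarrow> v \<in> players n - {c} \<Longrightarrow>
  {c, v} \<in> outcome_edges (star n c A)"
  unfolding edge_iff star_def by auto

lemma star_walk2:
  assumes c: "c \<in> players n" and A: "A \<subseteq> players n - {c}" and p: "p \<in> players n" and q: "q \<in> players n"
  shows "walk_le (outcome_edges (star n c A)) 2 p q"
proof -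
  let ?E = "outcome_edges (star n c A)"
  have pc: "walk_le ?E 1 p c"
  proof (cases "p = c")
    case True then show ?thesis using walk_mono_k[of ?E 0 p c 1] by auto
  next
    case False then show ?thesis using star_edge[OF c A, of p] p walk_sym[of ?E 1 c p]
      by (simp add: walk_snoc)
  qed
  have cq: "walk_le ?E 1 c q"
  proof (cases "q = c")
    case True then show ?thesis using walk_mono_k[of ?E 0 c q 1] by auto
  next
    case False then show ?thesis using star_edge[OF c A, of q] q by simp
  qed
  have "walk_le ?E (1+1) p q" by (rule walk_trans[OF pc cq])
  then show ?thesis by (simp only: one_add_one)
qed

lemma star_far:
  assumes "c \<in> players n" "A \<subseteq> players n - {c}" "2 \<le> \<beta>" "p \<in> players n"
  shows "far n (outcome_edges (star n c A)) \<beta> p = {}"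
  unfolding far_def using walk_mono_k[OF star_walk2[OF assms(1,2) assms(4)] assms(3)] by auto

lemma star_cost_p:
  assumes "c \<in> players n" "A \<subseteq> players n - {c}" "2 \<le> \<beta>" "p \<in> players n"
  shows "player_cost n w \<alpha> \<beta> (star n c A) p = \<alpha> * real (card (star n c A p))"
  unfolding cost_alt star_far[OF assms] by simp

lemma star_cost:
  assumes c: "c \<in> players n" and A: "A \<subseteq> players n - {c}" and b: "2 \<le> \<beta>"
  shows "social_cost n w \<alpha> \<beta> (star n c A) = \<alpha> * (real n - 1)"
proof -
  let ?B = "players n - {c} - A"
  have "(\<Sum>p\<in>players n. card (star n c A p)) = card (star n c A c) + (\<Sum>p\<in>players n - {c}. card (star n c A p))"
    using c by (simp add: sum.remove)
  also have "(\<Sum>p\<in>players n - {c}. card (star n c A p)) = (\<Sum>p\<in>players n - {c}. if p \<in> ?B then 1 else 0)"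
    by (intro sum.cong) (auto simp: star_def)
  also have "\<dots> = card ?B" by (simp add: sum.If_cases) (rule arg_cong[where f=card], blast)
  finally have "(\<Sum>p\<in>players n. card (star n c A p)) = card A + card ?B" by (simp add: star_def)
  also have "card A + card ?B = card (players n - {c})"
  proof -
    have fA: "finite A" using A by (auto intro: finite_subset[OF _ fin_players])
    have "card ?B = card (players n - {c}) - card A" using card_Diff_subset[OF fA A] .
    moreover have "card A \<le> card (players n - {c})" using card_mono[OF _ A] by simp
    ultimately show ?thesis by linarith
  qed
  also have "\<dots> = n - 1" using c by (simp add: sum_players_card)
  finally have e: "(\<Sum>p\<in>players n. card (star n c A p)) = n - 1" .
  have n1: "1 \<le> n" using c unfolding players_def by auto
  have "social_cost n w \<alpha> \<beta> (star n c A) = \<alpha> * real (\<Sum>p\<in>players n. card (star n c A p))"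
    unfolding social_cost_def sum_distrib_left of_nat_sum by (intro sum.cong refl star_cost_p[OF c A b])
  then show ?thesis using e n1 by (simp add: of_nat_diff)
qed

lemma star_conn:
  assumes "c \<in> players n" "A \<subseteq> players n - {c}"
  shows "connected_graph (players n) (outcome_edges (star n c A))"
  unfolding connected_graph_def gdist_fin using star_walk2[OF assms] by blast


lemma star_NE:
  assumes c: "celebrity_game n w \<alpha> \<beta>" and b2: "2 \<le> \<beta>" and cV: "c \<in> players n"
    and good: "\<forall>v\<in>players n - {c}. \<alpha> \<le> w v \<or> w v \<le> sum w (players n) - \<alpha>"
  shows "is_NE n w \<alpha> \<beta> (star n c {v\<in>players n - {c}. \<alpha> \<le> w v})"
  unfolding is_NE_def
proof (intro conjI ballI allI impI)
  define A where "A = {v\<in>players n - {c}. \<alpha> \<le> w v}"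
  have A: "A \<subseteq> players n - {c}" unfolding A_def by auto
  let ?S = "star n c A"
  show "star n c {v\<in>players n - {c}. \<alpha> \<le> w v} \<in> profiles n" using star_prof[OF cV A] unfolding A_def .
  fix p T
  assume p: "p \<in> players n" and P: "(star n c {v\<in>players n - {c}. \<alpha> \<le> w v})(p := T) \<in> profiles n"
  have P: "?S(p := T) \<in> profiles n" using P unfolding A_def .
  have T: "T \<subseteq> players n - {p}" using prof_upd_sub[OF P p] .
  have finT: "finite T" using T by (auto intro: finite_subset[OF _ fin_players])
  have apos: "0 < \<alpha>" using c unfolding celebrity_game_def by auto
  let ?E' = "outcome_edges (?S(p := T))"
  have cost: "player_cost n w \<alpha> \<beta> ?S p = \<alpha> * real (card (?S p))" by (rule star_cost_p[OF cV A b2 p])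
  have "player_cost n w \<alpha> \<beta> ?S p \<le> player_cost n w \<alpha> \<beta> (?S(p := T)) p"
  proof (cases "p = c")
    case True
    have iso: "a \<in> far n ?E' \<beta> p" if a: "a \<in> A - T" for a
    proof -
      have I: "\<forall>y. {a,y} \<notin> ?E'" using a A True unfolding edge_iff star_def by auto
      have "\<not> walk_le ?E' \<beta> p a"
      proof
        assume "walk_le ?E' \<beta> p a"
        then have "walk_le ?E' \<beta> a p" by (rule walk_sym)
        then have "p = a" by (rule walk_isolated[OF I])
        then show False using a A True by auto
      qed
      then show ?thesis using a A unfolding far_def by auto
    qed
    have fA: "finite A" using A by (auto intro: finite_subset[OF _ fin_players])
    have "real (card (A - T)) * \<alpha> \<le> sum w (A - T)"
      using sum_bounded_below[of "A - T" \<alpha> w] unfolding A_def by auto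
    also have "\<dots> \<le> sum w (far n ?E' \<beta> p)"
    proof -
      have "A - T \<subseteq> far n ?E' \<beta> p" using iso by blast
      then show ?thesis by (rule sum_w_mono[OF c _ far_sub])
    qed
    finally have f1: "real (card (A - T)) * \<alpha> \<le> sum w (far n ?E' \<beta> p)" .
    have "card A = card (A \<inter> T) + card (A - T)" using fA by (metis card_Int_Diff)
    moreover have "card (A \<inter> T) \<le> card T" using finT by (simp add: card_mono)
    ultimately have "real (card A) \<le> real (card T) + real (card (A - T))" by linarith
    then have "\<alpha> * real (card A) \<le> \<alpha> * real (card T) + real (card (A - T)) * \<alpha>"
      using apos mult_left_mono[of "real (card A)" "real (card T) + real (card (A - T))" \<alpha>]
      by (simp add: algebra_simps)
    moreover have "?S p = A" using True by (simp add: star_def)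
    then have "player_cost n w \<alpha> \<beta> ?S p = \<alpha> * real (card A)" using cost by simp
    moreover have "player_cost n w \<alpha> \<beta> (?S(p := T)) p = \<alpha> * real (card T) + sum w (far n ?E' \<beta> p)"
      unfolding cost_alt by simp
    ultimately show ?thesis using f1 cost by linarith
  next
    case pc: False
    show ?thesis
    proof (cases "p \<in> A")
      case True
      then have "?S p = {}" using pc by (simp add: star_def)
      then show ?thesis using cost cost_nonneg[OF c] by simp
    next
      case pA: False
      then have Sp: "?S p = {c}" using pc p by (simp add: star_def)
      have wp: "w p \<le> sum w (players n) - \<alpha>" using good p pc pA unfolding A_def by auto
      show ?thesis
      proof (cases "T = {}")
        case True
        have "\<forall>y. {p,y} \<notin> ?E'" using True pc pA unfolding edge_iff star_def by auto
        then have "far n ?E' \<beta> p = players n - {p}"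
          unfolding far_def using walk_isolated[of p ?E'] walk_mono_k[of ?E' 0 p p \<beta>] by auto
        then have "player_cost n w \<alpha> \<beta> (?S(p := T)) p = sum w (players n) - w p"
          unfolding cost_alt using True p by (simp add: sum_diff1)
        then show ?thesis using cost Sp wp by simp
      next
        case False
        then have "1 \<le> card T" using finT by (simp add: Suc_le_eq card_gt_0_iff)
        then have "\<alpha> \<le> \<alpha> * real (card T)" using apos by simp
        moreover have "0 \<le> sum w (far n ?E' \<beta> p)" using sum_w_nonneg[OF c far_sub] .
        moreover have "player_cost n w \<alpha> \<beta> (?S(p := T)) p = \<alpha> * real (card T) + sum w (far n ?E' \<beta> p)"
          unfolding cost_alt by simp
        moreover have "player_cost n w \<alpha> \<beta> ?S p = \<alpha>" using cost Sp by simp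
        ultimately show ?thesis by linarith
      qed
    qed
  qed
  then show "player_cost n w \<alpha> \<beta> (star n c {v\<in>players n - {c}. \<alpha> \<le> w v}) p
       \<le> player_cost n w \<alpha> \<beta> ((star n c {v\<in>players n - {c}. \<alpha> \<le> w v})(p := T)) p"
    by (simp add: A_def)
qed




lemma lower:
  assumes c: "celebrity_game n w \<alpha> \<beta>" and S: "S \<in> profiles n" and n1: "1 \<le> n"
  shows "(real n - 1) * min \<alpha> (sum w (players n)) \<le> social_cost n w \<alpha> \<beta> S"
proof -
  define E where "E = outcome_edges S"
  define V where "V = players n"
  define W where "W = sum w V"
  define conn where "conn a b \<longleftrightarrow> (\<exists>k. walk_le E k a b)" for a b
  have finV: "finite V" unfolding V_def by simp
  have cnsym: "conn a b \<Longrightarrow> conn b a" for a b unfolding conn_def using walk_sym by blast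
  have cntr: "conn a b \<Longrightarrow> conn b d \<Longrightarrow> conn a d" for a b d unfolding conn_def using walk_trans by blast
  have cnrefl: "conn a a" for a unfolding conn_def using walk_le.simps(1) by blast
  define \<rho> where "\<rho> v = Min {x\<in>V. conn v x}" for v
  have \<rho>1: "\<rho> v \<in> V \<and> conn v (\<rho> v)" if "v \<in> V" for v
  proof -
    have "{x\<in>V. conn v x} \<noteq> {}" using that cnrefl by auto
    then have "\<rho> v \<in> {x\<in>V. conn v x}" unfolding \<rho>_def using finV by (intro Min_in) auto
    then show ?thesis by auto
  qed
  have \<rho>2: "\<rho> v \<le> x" if "x \<in> V" "conn v x" for v x
    unfolding \<rho>_def using finV that by (intro Min_le) auto
  have \<rho>3: "\<rho> v = \<rho> v'" if "conn v v'" for v v'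
  proof -
    have "{x\<in>V. conn v x} = {x\<in>V. conn v' x}" using that cnsym cntr by blast
    then show ?thesis unfolding \<rho>_def by simp
  qed
  define R where "R = {v\<in>V. \<rho> v = v}"
  have \<rho>R: "\<rho> v \<in> R" if "v \<in> V" for v
    using \<rho>1[OF that] \<rho>3[of v "\<rho> v"] unfolding R_def by auto
  have RV: "R \<subseteq> V" unfolding R_def by auto
  have finR: "finite R" using RV finV finite_subset by blast
  have "1 \<in> V" unfolding V_def players_def using n1 by auto
  then have Rne: "R \<noteq> {}" using \<rho>R by blast
  have cardV: "card V = n" unfolding V_def by (simp add: sum_players_card)
  define k where "k = card R"
  have k1: "1 \<le> k" unfolding k_def using Rne finR by (simp add: Suc_le_eq card_gt_0_iff)
  have kn: "k \<le> n" unfolding k_def using card_mono[OF finV RV] cardV by simp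
  define D where "D v = (LEAST j. walk_le E j (\<rho> v) v)" for v
  have exP: "\<exists>p. walk_le E (D v - 1) (\<rho> v) p \<and> {p, v} \<in> E \<and> 0 < D v" if v: "v \<in> V - R" for v
  proof -
    have "conn (\<rho> v) v" using \<rho>1 v cnsym by auto
    then have wD: "walk_le E (D v) (\<rho> v) v" unfolding D_def conn_def by (rule LeastI_ex)
    have ne: "\<rho> v \<noteq> v" using v unfolding R_def by auto
    then have "D v \<noteq> 0" using wD by (cases "D v") auto
    then obtain d where d: "D v = Suc d" by (cases "D v") auto
    have "\<not> walk_le E d (\<rho> v) v" using not_less_Least[of d "\<lambda>j. walk_le E j (\<rho> v) v"] d unfolding D_def by auto
    then obtain p where "walk_le E d (\<rho> v) p" "{p, v} \<in> E" using wD d by auto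
    then show ?thesis using d by auto
  qed
  have "\<forall>v\<in>V - R. \<exists>p. walk_le E (D v - 1) (\<rho> v) p \<and> {p, v} \<in> E \<and> 0 < D v"
    by (intro ballI exP)
  from bchoice[OF this] obtain P where P0: "\<forall>v\<in>V - R. walk_le E (D v - 1) (\<rho> v) (P v) \<and> {P v, v} \<in> E \<and> 0 < D v"
    by (elim exE)
  have P: "walk_le E (D v - 1) (\<rho> v) (P v) \<and> {P v, v} \<in> E \<and> 0 < D v" if "v \<in> V - R" for v
    by (rule bspec[OF P0 that])
  define g where "g v = (if v \<in> S (P v) then (P v, v) else (v, P v))" for v
  have gP: "{fst (g v), snd (g v)} = {P v, v}" for v unfolding g_def by auto
  have gS: "g v \<in> Sigma V S" if v: "v \<in> V - R" for v
  proof -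
    have "{P v, v} \<in> outcome_edges S" using P[OF v] unfolding E_def by auto
    then have "v \<in> S (P v) \<or> P v \<in> S v" using edge_iff by auto
    then show ?thesis unfolding g_def V_def using prof_mem[OF S] by auto
  qed
  have ginj: "inj_on g (V - R)"
  proof
    fix v v' assume v: "v \<in> V - R" and v': "v' \<in> V - R" and eq: "g v = g v'"
    show "v = v'"
    proof (rule ccontr)
      assume ne: "v \<noteq> v'"
      have "{P v, v} = {P v', v'}" using gP[of v] gP[of v'] eq by simp
      then have pv: "P v = v'" "P v' = v" using ne by (auto simp: doubleton_eq_iff)
      have e1: "{v', v} \<in> E" using conjunct1[OF conjunct2[OF P[OF v]]] unfolding pv(1) .
      have "walk_le E (Suc 0) v' v" by (rule walk_snoc[OF _ e1]) simp
      then have "conn v' v" unfolding conn_def by blast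
      then have r: "\<rho> v' = \<rho> v" by (rule \<rho>3)
      have "walk_le E (D v - 1) (\<rho> v') v'" using conjunct1[OF P[OF v]] unfolding pv(1) r .
      then have "D v' \<le> D v - 1" unfolding D_def by (rule Least_le)
      moreover have "walk_le E (D v' - 1) (\<rho> v) v" using conjunct1[OF P[OF v']] unfolding pv(2) r .
      then have "D v \<le> D v' - 1" unfolding D_def by (rule Least_le)
      ultimately show False using P[OF v] P[OF v'] by linarith
    qed
  qed
  have finS: "finite (S u)" for u using prof_fin[OF S] .
  have "card (V - R) \<le> card (Sigma V S)"
  proof (rule card_inj_on_le[OF ginj])
    show "g ` (V - R) \<subseteq> Sigma V S" using gS by blast
    show "finite (Sigma V S)" using finV finS by (rule finite_SigmaI)
  qed
  also have "\<dots> = (\<Sum>u\<in>V. card (S u))" using finV finS by (simp add: card_SigmaI)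
  finally have part1: "real n - real k \<le> (\<Sum>u\<in>V. real (card (S u)))"
    using card_Diff_subset[OF finR RV] cardV kn k_def by (simp flip: of_nat_sum)
  have farsup: "{v\<in>V. \<not> conn u v} \<subseteq> far n E \<beta> u" for u
    unfolding far_def conn_def V_def by auto
  have "(\<Sum>u\<in>V. sum w {v\<in>V. \<not> conn u v}) \<le> (\<Sum>u\<in>V. sum w (far n E \<beta> u))"
  proof (intro sum_mono)
    fix u
    have "far n E \<beta> u \<subseteq> players n" by (rule far_sub)
    then show "sum w {v\<in>V. \<not> conn u v} \<le> sum w (far n E \<beta> u)"
      by (rule sum_w_mono[OF c farsup])
  qed
  moreover have "(\<Sum>u\<in>V. sum w {v\<in>V. \<not> conn u v}) = (\<Sum>v\<in>V. \<Sum>u\<in>{u\<in>V. \<not> conn u v}. w v)"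
    using sum.swap_restrict[OF finV finV, of "\<lambda>u v. w v" "\<lambda>u v. \<not> conn u v"] by simp
  moreover have "(\<Sum>v\<in>V. real (k - 1) * w v) \<le> (\<Sum>v\<in>V. \<Sum>u\<in>{u\<in>V. \<not> conn u v}. w v)"
  proof (intro sum_mono)
    fix v assume v: "v \<in> V"
    have "R - {\<rho> v} \<subseteq> {u\<in>V. \<not> conn u v}"
    proof
      fix r assume r: "r \<in> R - {\<rho> v}"
      have "\<not> conn r v"
      proof
        assume "conn r v" then have "\<rho> r = \<rho> v" by (rule \<rho>3)
        then show False using r unfolding R_def by auto
      qed
      then show "r \<in> {u\<in>V. \<not> conn u v}" using r RV by auto
    qed
    then have "card (R - {\<rho> v}) \<le> card {u\<in>V. \<not> conn u v}" using finV by (intro card_mono) auto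
    moreover have "card (R - {\<rho> v}) = k - 1" using \<rho>R[OF v] finR k_def by simp
    ultimately have "real (k - 1) \<le> real (card {u\<in>V. \<not> conn u v})" by simp
    moreover have "0 \<le> w v" using c v unfolding celebrity_game_def V_def by (auto simp: less_imp_le)
    ultimately show "real (k - 1) * w v \<le> (\<Sum>u\<in>{u\<in>V. \<not> conn u v}. w v)"
      by (simp add: mult_right_mono)
  qed
  ultimately have part2: "(real k - 1) * W \<le> (\<Sum>u\<in>V. sum w (far n E \<beta> u))"
    using k1 unfolding W_def by (simp add: sum_distrib_left of_nat_diff)
  have sc: "social_cost n w \<alpha> \<beta> S = \<alpha> * (\<Sum>u\<in>V. real (card (S u))) + (\<Sum>u\<in>V. sum w (far n E \<beta> u))"
    unfolding social_cost_def cost_alt E_def V_def by (simp add: sum.distrib sum_distrib_left)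
  have apos: "0 < \<alpha>" using c unfolding celebrity_game_def by auto
  let ?m = "min \<alpha> W"
  have "?m * (real n - real k) \<le> \<alpha> * (real n - real k)" using kn by (intro mult_right_mono) auto
  also have "\<dots> \<le> \<alpha> * (\<Sum>u\<in>V. real (card (S u)))" using part1 apos by (intro mult_left_mono) auto
  finally have a1: "?m * (real n - real k) \<le> \<alpha> * (\<Sum>u\<in>V. real (card (S u)))" .
  have "?m * (real k - 1) \<le> W * (real k - 1)" using k1 by (intro mult_right_mono) auto
  then have a2: "?m * (real k - 1) \<le> (\<Sum>u\<in>V. sum w (far n E \<beta> u))" using part2 by (simp add: mult.commute)
  have "(real n - 1) * ?m = ?m * (real n - real k) + ?m * (real k - 1)" by (simp add: algebra_simps)
  then show ?thesis using a1 a2 sc unfolding W_def V_def by linarith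
qed




lemma empty_not_conn:
  assumes "2 \<le> n" shows "\<not> connected_graph (players n) (outcome_edges (\<lambda>_. {}))"
proof
  assume "connected_graph (players n) (outcome_edges (\<lambda>_. {}))"
  moreover have "1 \<in> players n" "2 \<in> players n" using assms unfolding players_def by auto
  ultimately obtain k where "walk_le {} k 1 2" unfolding connected_graph_def gdist_fin empty_edges by blast
  then have "(2::nat) = 1" by (rule walk_isolated[rotated]) simp
  then show False by simp
qed

lemma good_star:
  assumes c: "celebrity_game n w \<alpha> \<beta>" and b2: "2 \<le> \<beta>" and n1: "1 \<le> n"
    and nb: "\<not> (\<exists>u u'. u \<in> players n \<and> u' \<in> players n \<and> u \<noteq> u' \<and>
              sum w (players n) - \<alpha> < w u \<and> w u < \<alpha> \<and> sum w (players n) - \<alpha> < w u' \<and> w u' < \<alpha>)"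
  shows "\<exists>S. is_NE n w \<alpha> \<beta> S \<and> connected_graph (players n) (outcome_edges S)
              \<and> social_cost n w \<alpha> \<beta> S = \<alpha> * (real n - 1)"
proof -
  let ?W = "sum w (players n)"
  obtain cc where cc: "cc \<in> players n"
    and good: "\<forall>v\<in>players n - {cc}. \<alpha> \<le> w v \<or> w v \<le> ?W - \<alpha>"
  proof (cases "\<exists>u0\<in>players n. ?W - \<alpha> < w u0 \<and> w u0 < \<alpha>")
    case True
    then obtain u0 where u0: "u0 \<in> players n" "?W - \<alpha> < w u0 \<and> w u0 < \<alpha>" by blast
    have "\<forall>v\<in>players n - {u0}. \<alpha> \<le> w v \<or> w v \<le> ?W - \<alpha>"
    proof
      fix v assume v: "v \<in> players n - {u0}"
      show "\<alpha> \<le> w v \<or> w v \<le> ?W - \<alpha>"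
      proof (rule ccontr)
        assume "\<not> (\<alpha> \<le> w v \<or> w v \<le> ?W - \<alpha>)"
        then have "?W - \<alpha> < w v \<and> w v < \<alpha>" by linarith
        then show False using nb u0 v by blast
      qed
    qed
    then show ?thesis using that u0(1) by blast
  next
    case False
    have "1 \<in> players n" using n1 unfolding players_def by auto
    moreover have "\<forall>v\<in>players n - {1}. \<alpha> \<le> w v \<or> w v \<le> ?W - \<alpha>"
    proof
      fix v assume v: "v \<in> players n - {1}"
      show "\<alpha> \<le> w v \<or> w v \<le> ?W - \<alpha>"
      proof (rule ccontr)
        assume "\<not> (\<alpha> \<le> w v \<or> w v \<le> ?W - \<alpha>)"
        then have "?W - \<alpha> < w v \<and> w v < \<alpha>" by linarith
        then show False using False v by blast
      qed
    qed
    ultimately show ?thesis using that by blast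
  qed
  define A where "A = {v\<in>players n - {cc}. \<alpha> \<le> w v}"
  have A: "A \<subseteq> players n - {cc}" unfolding A_def by auto
  have "is_NE n w \<alpha> \<beta> (star n cc A)" unfolding A_def by (rule star_NE[OF c b2 cc good])
  moreover have "connected_graph (players n) (outcome_edges (star n cc A))" by (rule star_conn[OF cc A])
  moreover have "social_cost n w \<alpha> \<beta> (star n cc A) = \<alpha> * (real n - 1)" by (rule star_cost[OF cc A b2])
  ultimately show ?thesis by blast
qed

theorem theorem1:
  fixes n :: nat and w :: "nat \<Rightarrow> real" and \<alpha> :: real and \<beta> :: nat
  assumes "celebrity_game n w \<alpha> \<beta>"
    and "\<beta> > 1"
  defines "W \<equiv> (\<Sum>u\<in>players n. w u)"
  shows "(star_celebrity_game n w \<alpha> \<beta> \<longrightarrow> PoS n w \<alpha> \<beta> = 1)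
     \<and> (\<not> star_celebrity_game n w \<alpha> \<beta> \<and> \<alpha> \<ge> W \<longrightarrow>
          PoS n w \<alpha> \<beta> = 1 \<and> PoA n w \<alpha> \<beta> = 1)
     \<and> (\<not> star_celebrity_game n w \<alpha> \<beta> \<and> \<alpha> < W \<longrightarrow>
          PoS n w \<alpha> \<beta> = W / \<alpha> \<and> PoA n w \<alpha> \<beta> = W / \<alpha> \<and> W / \<alpha> > 1)"
proof -
  note c = assms(1)
  have b2: "2 \<le> \<beta>" using assms(2) by simp
  have n3: "3 \<le> n" using c assms(2) unfolding celebrity_game_def by linarith
  have n1: "1 \<le> n" using n3 by simp
  have apos: "0 < \<alpha>" using c unfolding celebrity_game_def by auto
  have oneV: "1 \<in> players n" using n1 unfolding players_def by auto
  have wle: "w v \<le> W" if "v \<in> players n" for v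
    using sum_w_mono[OF c, of "{v}" "players n"] that unfolding W_def by simp
  have Wpos: "0 < W"
    using c oneV wle unfolding celebrity_game_def by (meson less_le_trans order_refl)
  have opt: "opt n w \<alpha> \<beta> = (real n - 1) * min \<alpha> W"
    unfolding opt_def
  proof (rule Min_eqI)
    show "finite (social_cost n w \<alpha> \<beta> ` profiles n)" using fin_profiles by simp
    show "(real n - 1) * min \<alpha> W \<le> y" if "y \<in> social_cost n w \<alpha> \<beta> ` profiles n" for y
      using that lower[OF c _ n1] unfolding W_def by auto
    show "(real n - 1) * min \<alpha> W \<in> social_cost n w \<alpha> \<beta> ` profiles n"
    proof (cases "\<alpha> \<le> W")
      case True
      have "star n 1 {} \<in> profiles n" using star_prof[OF oneV] by simp
      moreover have "social_cost n w \<alpha> \<beta> (star n 1 {}) = (real n - 1) * min \<alpha> W"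
        using star_cost[OF oneV _ b2] True by simp
      ultimately show ?thesis by (metis image_eqI)
    next
      case False
      have "social_cost n w \<alpha> \<beta> (\<lambda>_. {}) = (real n - 1) * min \<alpha> W"
        using empty_cost False unfolding W_def by simp
      then show ?thesis using empty_prof by (metis image_eqI)
    qed
  qed
  have optpos: "0 < opt n w \<alpha> \<beta>" unfolding opt using n3 apos Wpos by simp
  define N where "N = {S. is_NE n w \<alpha> \<beta> S}"
  have finN: "finite N" unfolding N_def is_NE_def
    by (rule finite_subset[OF _ fin_profiles]) auto
  have rat1: "1 \<le> social_cost n w \<alpha> \<beta> S / opt n w \<alpha> \<beta>" if "S \<in> N" for S
  proof -
    have "S \<in> profiles n" using that unfolding N_def is_NE_def by auto
    then have "opt n w \<alpha> \<beta> \<le> social_cost n w \<alpha> \<beta> S"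
      unfolding opt_def using fin_profiles by (intro Min_le) auto
    then show ?thesis using optpos by simp
  qed
  have bad2: "\<exists>u u'. u \<in> players n \<and> u' \<in> players n \<and> u \<noteq> u' \<and>
              W - \<alpha> < w u \<and> w u < \<alpha> \<and> W - \<alpha> < w u' \<and> w u' < \<alpha>"
    if ns: "\<not> star_celebrity_game n w \<alpha> \<beta>"
  proof (rule ccontr)
    assume "\<not> ?thesis"
    then obtain S where "is_NE n w \<alpha> \<beta> S" "connected_graph (players n) (outcome_edges S)"
      using good_star[OF c b2 n1] unfolding W_def by blast
    then show False using ns unfolding star_celebrity_game_def by blast
  qed
  have Nempty: "N = {\<lambda>_. {}}" if all: "\<And>S. is_NE n w \<alpha> \<beta> S \<Longrightarrow> S = (\<lambda>_. {})"
    and small: "\<forall>v\<in>players n. w v \<le> \<alpha>"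
    using all empty_NE[OF c small] unfolding N_def by blast
  have part1: "star_celebrity_game n w \<alpha> \<beta> \<longrightarrow> PoS n w \<alpha> \<beta> = 1"
  proof
    assume st: "star_celebrity_game n w \<alpha> \<beta>"
    then obtain S0 where S0: "is_NE n w \<alpha> \<beta> S0" "connected_graph (players n) (outcome_edges S0)"
      unfolding star_celebrity_game_def by blast
    have S0ne: "S0 \<noteq> (\<lambda>_. {})" using S0(2) empty_not_conn n3 by fastforce
    have aW: "\<alpha> < W"
    proof (rule ccontr)
      assume "\<not> \<alpha> < W"
      then show False using NE_no_owner_big[OF c S0(1)] S0ne unfolding W_def by simp
    qed
    have "\<not> (\<exists>u u'. u \<in> players n \<and> u' \<in> players n \<and> u \<noteq> u' \<and>
              W - \<alpha> < w u \<and> w u < \<alpha> \<and> W - \<alpha> < w u' \<and> w u' < \<alpha>)"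
      using NE_no_owner_bad[OF c S0(1)] S0ne unfolding W_def by blast
    then obtain S where S: "is_NE n w \<alpha> \<beta> S" "social_cost n w \<alpha> \<beta> S = \<alpha> * (real n - 1)"
      using good_star[OF c b2 n1] unfolding W_def by blast
    have "social_cost n w \<alpha> \<beta> S / opt n w \<alpha> \<beta> = 1"
      using S(2) opt aW n3 apos by simp
    then have "1 \<in> (\<lambda>S. social_cost n w \<alpha> \<beta> S / opt n w \<alpha> \<beta>) ` N" using S(1) unfolding N_def by force
    then show "PoS n w \<alpha> \<beta> = 1" unfolding PoS_def N_def[symmetric]
      using finN rat1 by (intro Min_eqI) auto
  qed
  have part2: "\<not> star_celebrity_game n w \<alpha> \<beta> \<and> \<alpha> \<ge> W \<longrightarrow> PoS n w \<alpha> \<beta> = 1 \<and> PoA n w \<alpha> \<beta> = 1"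
  proof
    assume h: "\<not> star_celebrity_game n w \<alpha> \<beta> \<and> \<alpha> \<ge> W"
    have NE: "N = {\<lambda>_. {}}"
      using Nempty NE_no_owner_big[OF c] h wle unfolding W_def by fastforce
    have "social_cost n w \<alpha> \<beta> (\<lambda>_. {}) / opt n w \<alpha> \<beta> = 1"
      using empty_cost opt h n3 Wpos unfolding W_def by simp
    then show "PoS n w \<alpha> \<beta> = 1 \<and> PoA n w \<alpha> \<beta> = 1"
      unfolding PoS_def PoA_def N_def[symmetric] NE by simp
  qed
  have part3: "\<not> star_celebrity_game n w \<alpha> \<beta> \<and> \<alpha> < W \<longrightarrow>
          PoS n w \<alpha> \<beta> = W / \<alpha> \<and> PoA n w \<alpha> \<beta> = W / \<alpha> \<and> W / \<alpha> > 1"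
  proof
    assume h: "\<not> star_celebrity_game n w \<alpha> \<beta> \<and> \<alpha> < W"
    obtain u u' where uu: "u \<in> players n" "u' \<in> players n" "u \<noteq> u'"
      "W - \<alpha> < w u" "w u < \<alpha>" "W - \<alpha> < w u'" "w u' < \<alpha>"
      using bad2 h by blast
    have small: "\<forall>v\<in>players n. w v \<le> \<alpha>"
    proof
      fix v assume v: "v \<in> players n"
      show "w v \<le> \<alpha>"
      proof (cases "v = u")
        case True then show ?thesis using uu by simp
      next
        case False
        have "sum w {v, u} \<le> W" using sum_w_mono[OF c, of "{v,u}" "players n"] v uu unfolding W_def by simp
        then show ?thesis using False uu by simp
      qed
    qed
    have NE: "N = {\<lambda>_. {}}"
      using Nempty[OF _ small] NE_no_owner_bad[OF c _ uu(1,2,3)] uu unfolding W_def by blast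
    have "social_cost n w \<alpha> \<beta> (\<lambda>_. {}) / opt n w \<alpha> \<beta> = W / \<alpha>"
      using empty_cost opt h n3 apos unfolding W_def by simp
    moreover have "W / \<alpha> > 1" using h apos by simp
    ultimately show "PoS n w \<alpha> \<beta> = W / \<alpha> \<and> PoA n w \<alpha> \<beta> = W / \<alpha> \<and> W / \<alpha> > 1"
      unfolding PoS_def PoA_def N_def[symmetric] NE by simp
  qed
  show ?thesis using part1 part2 part3 by blast
qed


end
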